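(* Let $a=(a_2,\dots,a_k)$ be nonnegative integers with $\sum_{i=2}^k ia_i=2^t$ for some $t\ge 1$. Then \[ \binom{|a|}{a}\equiv\sum_{j=1}^{\lfloor k/2\rfloor}\binom{|a|-1}{\hat a_{2j}}\pmod 2 . \]
   Context: $|a|=a_2+\dots+a_k$, $\binom{|a|}{a}=\frac{|a|!}{a_2!\cdots a_k!}$, $\hat a_j=(a_2,\dots,a_j-1,\dots,a_k)$; the multinomial coefficient of a tuple with a negative entry is defined to be $0$. *)

theory Defs
  imports Main
begin

text \<open>A tuple a = (a_2,...,a_k) of nonnegative integers is a function a :: nat => nat,
  of which only the entries at indices 2..k are used.\<close>

definition abs_tuple :: "nat \<Rightarrow> (nat \<Rightarrow> nat) \<Rightarrow> nat" where
  "abs_tuple k a = (\<Sum>i=2..k. a i)"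

definition multinom :: "nat \<Rightarrow> (nat \<Rightarrow> nat) \<Rightarrow> nat" where
  "multinom k a = fact (abs_tuple k a) div (\<Prod>i=2..k. fact (a i))"

text \<open>Multinomial coefficient of hat a_j = (a_2,...,a_j - 1,...,a_k), over the top |a| - 1;
  it is 0 when a_j = 0 (negative entry).\<close>
definition multinom_hat :: "nat \<Rightarrow> (nat \<Rightarrow> nat) \<Rightarrow> nat \<Rightarrow> nat" where
  "multinom_hat k a j =
     (if a j = 0 then 0
      else fact (abs_tuple k a - 1) div (\<Prod>i=2..k. fact ((a(j := a j - 1)) i)))"

end

theory Submission
  imports Defs
begin

lemma prod_fact_dvd:
  "finite S \<Longrightarrow> (\<Prod>i\<in>S. fact (f i)) dvd (fact (\<Sum>i\<in>S. f i) :: nat)"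
proof (induction S rule: finite_induct)
  case empty
  then show ?case by simp
next
  case (insert x S)
  let ?s = "\<Sum>i\<in>S. f i"
  have "fact (f x) * fact ?s * ((f x + ?s) choose (f x)) = (fact (f x + ?s) :: nat)"
    using binomial_fact_lemma[of "f x" "f x + ?s"] by simp
  then have "fact (f x) * fact ?s dvd (fact (f x + ?s) :: nat)"
    by (metis dvd_triv_left)
  moreover have "fact (f x) * (\<Prod>i\<in>S. fact (f i)) dvd fact (f x) * (fact ?s :: nat)"
    using insert by simp
  ultimately have "fact (f x) * (\<Prod>i\<in>S. fact (f i)) dvd (fact (f x + ?s) :: nat)"
    using dvd_trans by blast
  then show ?case using insert by simp
qed

lemma hat_rel:
  assumes j: "j \<in> {2..k}"
  shows "multinom_hat k a j * abs_tuple k a = multinom k a * a j"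
proof (cases "a j = 0")
  case True
  then show ?thesis by (simp add: multinom_hat_def)
next
  case False
  define b where "b = a(j := a j - 1)"
  define n where "n = abs_tuple k a"
  define P where "P = (\<Prod>i=2..k. fact (a i) :: nat)"
  define Q where "Q = (\<Prod>i=2..k. fact (b i) :: nat)"
  have fin: "finite {2..k}" by simp
  have sa: "n = a j + (\<Sum>i\<in>{2..k}-{j}. a i)"
    unfolding n_def abs_tuple_def using sum.remove[OF fin j] by simp
  have sb: "(\<Sum>i=2..k. b i) = b j + (\<Sum>i\<in>{2..k}-{j}. b i)"
    using sum.remove[OF fin j] by simp
  have eqo: "(\<Sum>i\<in>{2..k}-{j}. b i) = (\<Sum>i\<in>{2..k}-{j}. a i)"
    by (rule sum.cong) (auto simp: b_def)
  have sb2: "(\<Sum>i=2..k. b i) = n - 1"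
    using sb eqo sa False by (simp add: b_def)
  have pa: "P = fact (a j) * (\<Prod>i\<in>{2..k}-{j}. fact (a i))"
    unfolding P_def using prod.remove[OF fin j] by simp
  have pb: "Q = fact (b j) * (\<Prod>i\<in>{2..k}-{j}. fact (b i))"
    unfolding Q_def using prod.remove[OF fin j] by simp
  have eqp: "(\<Prod>i\<in>{2..k}-{j}. fact (b i)) = (\<Prod>i\<in>{2..k}-{j}. (fact (a i) :: nat))"
    by (rule prod.cong) (auto simp: b_def)
  have faj: "fact (a j) = a j * (fact (a j - 1) :: nat)"
    using False by (metis fact_Suc Suc_pred' not_gr_zero of_nat_id)
  have PQ: "P = a j * Q" using pa pb eqp faj by (simp add: b_def)
  have npos: "n > 0" using sa False by simp
  have fn: "(fact n :: nat) = n * fact (n - 1)"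
    using npos by (metis fact_Suc Suc_pred' of_nat_id)
  have "P dvd fact n" unfolding P_def n_def abs_tuple_def by (rule prod_fact_dvd) simp
  then obtain M where M: "fact n = P * M" by blast
  have "Q dvd fact (n - 1)" unfolding Q_def sb2[symmetric] by (rule prod_fact_dvd) simp
  then obtain H where H: "fact (n - 1) = Q * H" by blast
  have Qpos: "Q > 0" unfolding Q_def by (simp add: prod_pos)
  have Ppos: "P > 0" unfolding P_def by (simp add: prod_pos)
  have mult: "multinom k a = M"
    unfolding multinom_def using M Ppos P_def n_def by simp
  have hat: "multinom_hat k a j = H"
    unfolding multinom_hat_def using H Qpos False Q_def n_def b_def by simp
  have "Q * (a j * M) = Q * (n * H)"
    using M H fn PQ by (metis mult.assoc mult.commute)
  then have "a j * M = n * H" using Qpos by simp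
  then show ?thesis using mult hat n_def by (simp add: mult.commute)
qed

theorem mainTheorem7:
  fixes k t :: nat and a :: "nat \<Rightarrow> nat"
  assumes "t \<ge> 1"
    and "(\<Sum>i=2..k. i * a i) = 2 ^ t"
  shows "multinom k a mod 2 = (\<Sum>j=1..k div 2. multinom_hat k a (2 * j)) mod 2"
proof -
  define n where "n = abs_tuple k a"
  define M where "M = multinom k a"
  define h where "h = multinom_hat k a"
  have rel: "\<And>j. j \<in> {2..k} \<Longrightarrow> h j * n = M * a j"
    using hat_rel unfolding h_def M_def n_def by blast
  have "(\<Sum>j=2..k. h j) * n = (\<Sum>j=2..k. M * a j)"
    unfolding sum_distrib_right by (rule sum.cong) (auto simp: rel)
  also have "\<dots> = M * n" unfolding n_def abs_tuple_def by (simp add: sum_distrib_left)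
  finally have s1: "(\<Sum>j=2..k. h j) * n = M * n" .
  have "(\<Sum>j=2..k. j * h j) * n = (\<Sum>j=2..k. M * (j * a j))"
    unfolding sum_distrib_right by (rule sum.cong) (auto simp: rel[symmetric] algebra_simps)
  also have "\<dots> = M * 2 ^ t" using assms(2) by (simp add: sum_distrib_left[symmetric])
  finally have s2: "(\<Sum>j=2..k. j * h j) * n = M * 2 ^ t" .
  have "2 * n = (\<Sum>i=2..k. 2 * a i)" unfolding n_def abs_tuple_def by (simp add: sum_distrib_left)
  also have "\<dots> \<le> (\<Sum>i=2..k. i * a i)" by (rule sum_mono) auto
  finally have le: "2 * n \<le> 2 ^ t" using assms(2) by simp
  have npos: "n > 0"
  proof (rule ccontr)
    assume "\<not> n > 0"
    then have "\<forall>i\<in>{2..k}. a i = 0" unfolding n_def abs_tuple_def by simp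
    then have "(\<Sum>i=2..k. i * a i) = 0" by simp
    then show False using assms(2) by simp
  qed
  have sumM: "(\<Sum>j=2..k. h j) = M" using s1 npos by simp
  have evS: "even (\<Sum>j=2..k. j * h j)"
  proof (rule ccontr)
    assume od: "odd (\<Sum>j=2..k. j * h j)"
    have "2 ^ t dvd (\<Sum>j=2..k. j * h j) * n" using s2 by simp
    moreover have "coprime (2 ^ t) (\<Sum>j=2..k. j * h j)"
      using od by (simp add: coprime_commute)
    ultimately have "2 ^ t dvd n" using coprime_dvd_mult_right_iff by blast
    then have "2 ^ t \<le> n" using npos by (simp add: dvd_imp_le)
    then show False using le npos by simp
  qed
  define E where "E = {j\<in>{2..k}. even j}"
  define Od where "Od = {j\<in>{2..k}. odd j}"
  have fin: "finite E" "finite Od" unfolding E_def Od_def by auto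
  have split: "{2..k} = E \<union> Od" "E \<inter> Od = {}" unfolding E_def Od_def by auto
  have A: "(\<Sum>j=2..k. h j) = (\<Sum>j\<in>E. h j) + (\<Sum>j\<in>Od. h j)"
    using split fin by (simp add: sum.union_disjoint)
  have B: "(\<Sum>j=2..k. j * h j) = (\<Sum>j\<in>E. j * h j) + (\<Sum>j\<in>Od. j * h j)"
    using split fin by (simp add: sum.union_disjoint)
  have evE: "even (\<Sum>j\<in>E. j * h j)"
    by (rule dvd_sum) (auto simp: E_def)
  have "(\<Sum>j\<in>Od. j * h j) mod 2 = (\<Sum>j\<in>Od. (j * h j) mod 2) mod 2" by (simp add: mod_sum_eq)
  also have "(\<Sum>j\<in>Od. (j * h j) mod 2) = (\<Sum>j\<in>Od. h j mod 2)"
  proof (rule sum.cong)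
    fix j assume "j \<in> Od"
    then have "odd j" unfolding Od_def by simp
    then show "(j * h j) mod 2 = h j mod 2" by (simp add: mod_mult_eq[symmetric] odd_iff_mod_2_eq_one)
  qed simp
  also have "(\<Sum>j\<in>Od. h j mod 2) mod 2 = (\<Sum>j\<in>Od. h j) mod 2" by (simp add: mod_sum_eq)
  finally have C: "(\<Sum>j\<in>Od. j * h j) mod 2 = (\<Sum>j\<in>Od. h j) mod 2" .
  have evO: "even (\<Sum>j\<in>Od. h j)"
  proof -
    have "even (\<Sum>j\<in>Od. j * h j)" using evS evE B by simp
    then show ?thesis using C by (simp add: even_iff_mod_2_eq_zero)
  qed
  have reidx: "E = (\<lambda>j. 2 * j) ` {1..k div 2}"
  proof
    show "E \<subseteq> (\<lambda>j. 2 * j) ` {1..k div 2}"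
    proof
      fix x assume "x \<in> E"
      then have x: "even x" "2 \<le> x" "x \<le> k" unfolding E_def by auto
      then obtain m where "x = 2 * m" by blast
      with x show "x \<in> (\<lambda>j. 2 * j) ` {1..k div 2}" by auto
    qed
    show "(\<lambda>j. 2 * j) ` {1..k div 2} \<subseteq> E" unfolding E_def by auto
  qed
  have "(\<Sum>j\<in>E. h j) = (\<Sum>j=1..k div 2. h (2 * j))"
    unfolding reidx by (subst sum.reindex) (auto simp: inj_on_def)
  then have "M mod 2 = (\<Sum>j=1..k div 2. h (2 * j)) mod 2"
    using sumM A evO by (metis add.commute mod_add_self2 even_iff_mod_2_eq_zero mod_add_left_eq add_0)
  then show ?thesis unfolding M_def h_def .
qed

end
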